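(* Let $A$ be an AP-irreducible sign pattern matrix of order $n$. If $A[\alpha,\beta]$ contains no entry equal to $+$ for any two distinct irreducible components $\alpha$ and $\beta$ of $A_+$, then $A$ allows algebraic positivity.
   Context: A sign pattern matrix is a matrix with entries in $\{+,-,0\}$. Its qualitative class $Q(A)$ is the set of real matrices obtained by replacing each $+$ by some positive number, each $-$ by some negative number and each $0$ by $0$. A real square matrix $M$ is algebraically positive if there is a real polynomial $f$ such that every entry of $f(M)$ is positive. A sign pattern $A$ allows algebraic positivity if some matrix in $Q(A)$ is algebraically positive. The digraph $D(A)$ of an $n\times n$ (sign pattern or real) matrix $A$ has vertex set $\{1,\dots,n\}$ and an arc $i\to j$ iff $a_{ij}\neq 0$; $A$ is irreducible if $n=1$ or $D(A)$ is strongly connected. For a sign pattern $A$: $A_+$ is obtained from $A$ by replacing every entry that is not $+$ by $0$; $A_-$ is obtained by replacing every entry that is not $-$ by $0$; $B_A=A_+-(A_-)^T$, i.e. $(B_A)_{ij}=+$ if $a_{ij}=+$ or $a_{ji}=-$, and $(B_A)_{ij}=0$ otherwise. An irreducible sign pattern $A$ is AP-irreducible if every row and every column of $A$ contains a $+$ and $B_A$ is irreducible. For $\alpha,\beta\subseteq\{1,\dots,n\}$, $A[\alpha,\beta]$ is the submatrix with rows indexed by $\alpha$ and columns indexed by $\beta$, and $A[\alpha]=A[\alpha,\alpha]$. The irreducible components of a sign pattern $M$ of order $n$ are the pairwise disjoint nonempty sets $\alpha_1,\dots,\alpha_m$ partitioning $\{1,\dots,n\}$ such that each $M[\alpha_i]$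 is irreducible and no $\beta\supsetneq\alpha_i$ has $M[\beta]$ irreducible (equivalently, the vertex sets of the strongly connected components of $D(M)$). *)

theory Defs
  imports "HOL-Analysis.Analysis" "HOL-Computational_Algebra.Polynomial"
begin

datatype sign = Pos | Neg | Zero

type_synonym 'n sign_pattern = "'n \<Rightarrow> 'n \<Rightarrow> sign"

definition qual_class :: "('n::finite) sign_pattern \<Rightarrow> (real^'n^'n) set" where
  "qual_class A = {M. \<forall>i j. (A i j = Pos \<longrightarrow> M$i$j > 0) \<and> (A i j = Neg \<longrightarrow> M$i$j < 0)
                         \<and> (A i j = Zero \<longrightarrow> M$i$j = 0)}"

definition mat_power :: "real^'n^'n \<Rightarrow> nat \<Rightarrow> real^'n^'n" where
  "mat_power M k = ((\<lambda>X. X ** M) ^^ k) (mat 1)"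

definition poly_mat :: "real poly \<Rightarrow> real^'n^'n \<Rightarrow> real^'n^'n" where
  "poly_mat f M = (\<Sum>k\<le>degree f. coeff f k *\<^sub>R mat_power M k)"

definition algebraically_positive :: "real^'n^'n \<Rightarrow> bool" where
  "algebraically_positive M \<longleftrightarrow> (\<exists>f. \<forall>i j. poly_mat f M $ i $ j > 0)"

definition allows_AP :: "('n::finite) sign_pattern \<Rightarrow> bool" where
  "allows_AP A \<longleftrightarrow> (\<exists>M \<in> qual_class A. algebraically_positive M)"

definition arcs :: "'n sign_pattern \<Rightarrow> ('n \<times> 'n) set" where
  "arcs A = {(i,j). A i j \<noteq> Zero}"

definition irreducible_on :: "'n sign_pattern \<Rightarrow> 'n set \<Rightarrow> bool" where
  "irreducible_on A \<alpha> \<longleftrightarrow> card \<alpha> = 1 \<or>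
     (\<forall>i\<in>\<alpha>. \<forall>j\<in>\<alpha>. (i,j) \<in> (arcs A \<inter> (\<alpha> \<times> \<alpha>))\<^sup>*)"

definition irreducible_sp :: "('n::finite) sign_pattern \<Rightarrow> bool" where
  "irreducible_sp A \<longleftrightarrow> irreducible_on A UNIV"

definition irr_component :: "('n::finite) sign_pattern \<Rightarrow> 'n set \<Rightarrow> bool" where
  "irr_component M \<alpha> \<longleftrightarrow> \<alpha> \<noteq> {} \<and> irreducible_on M \<alpha> \<and>
     (\<forall>\<beta>. \<alpha> \<subset> \<beta> \<longrightarrow> \<not> irreducible_on M \<beta>)"

definition pos_part :: "'n sign_pattern \<Rightarrow> 'n sign_pattern" where
  "pos_part A = (\<lambda>i j. if A i j = Pos then Pos else Zero)"

definition B_pat :: "'n sign_pattern \<Rightarrow> 'n sign_pattern" where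
  "B_pat A = (\<lambda>i j. if A i j = Pos \<or> A j i = Neg then Pos else Zero)"

definition AP_irreducible :: "('n::finite) sign_pattern \<Rightarrow> bool" where
  "AP_irreducible A \<longleftrightarrow> irreducible_sp A \<and> (\<forall>i. \<exists>j. A i j = Pos) \<and> (\<forall>j. \<exists>i. A i j = Pos)
     \<and> irreducible_sp (B_pat A)"

end

theory Submission
  imports Defs
begin

definition netf :: "('e::finite \<Rightarrow> 'v) \<Rightarrow> ('e \<Rightarrow> 'v) \<Rightarrow> ('e \<Rightarrow> real) \<Rightarrow> 'v \<Rightarrow> real" where
  "netf src dst c v = (\<Sum>e\<in>UNIV. c e * ((if src e = v then 1 else 0) - (if dst e = v then 1 else 0)))"

lemma netf_add: "netf src dst (\<lambda>e. c e + d e) v = netf src dst c v + netf src dst d v"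
  unfolding netf_def sum.distrib[symmetric] by (rule sum.cong) (auto simp: algebra_simps)

lemma netf_sum: "finite S \<Longrightarrow> netf src dst (\<lambda>e. \<Sum>x\<in>S. f x e) v = (\<Sum>x\<in>S. netf src dst (f x) v)"
  by (induction S rule: finite_induct) (simp_all add: netf_add, simp add: netf_def)

lemma netf_ind: "netf src dst (\<lambda>x. if x = e then 1 else 0) v = (if src e = v then 1 else 0) - (if dst e = v then 1 else 0)"
  unfolding netf_def by (simp add: if_distrib[of "\<lambda>x. x * _"] cong: if_cong)

lemma path_flow:
  fixes src dst :: "'e::finite \<Rightarrow> 'v"
  assumes "(p,q) \<in> {(src e, dst e) | e. e \<in> S}\<^sup>*"
  shows "\<exists>c. (\<forall>e. c e \<ge> 0) \<and> (\<forall>e. e \<notin> S \<longrightarrow> c e = 0) \<and>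
     (\<forall>v. netf src dst c v = (if p = v then 1 else 0) - (if q = v then 1 else 0))"
  using assms
proof (induction rule: rtrancl_induct)
  case base
  show ?case by (rule exI[of _ "\<lambda>e. 0"]) (simp add: netf_def)
next
  case (step r q)
  then obtain c where c: "\<forall>e. c e \<ge> 0" "\<forall>e. e \<notin> S \<longrightarrow> c e = 0"
     "\<forall>v. netf src dst c v = (if p = v then 1 else 0) - (if r = v then 1 else 0)" by blast
  from step(2) obtain e where e: "e \<in> S" "src e = r" "dst e = q" by blast
  show ?case
  proof (rule exI[of _ "\<lambda>x. c x + (if x = e then 1 else 0)"], intro conjI allI impI)
    fix x show "0 \<le> c x + (if x = e then 1 else 0)" using c by simp
  next
    fix x assume "x \<notin> S" then show "c x + (if x = e then 1 else 0) = 0" using c e by auto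
  next
    fix v show "netf src dst (\<lambda>x. c x + (if x = e then 1 else 0)) v = (if p = v then 1 else 0) - (if q = v then 1 else 0)"
      unfolding netf_add netf_ind using c(3) e by simp
  qed
qed

lemma circulation:
  fixes src dst :: "'e::finite \<Rightarrow> 'v"
  assumes "\<forall>e\<in>S. (dst e, src e) \<in> {(src e, dst e) | e. e \<in> S}\<^sup>*"
  shows "\<exists>c. (\<forall>e. c e \<ge> 0) \<and> (\<forall>e\<in>S. c e > 0) \<and> (\<forall>e. e \<notin> S \<longrightarrow> c e = 0) \<and> (\<forall>v. netf src dst c v = 0)"
proof -
  have "\<forall>e\<in>S. \<exists>c. (\<forall>x. c x \<ge> 0) \<and> (\<forall>x. x \<notin> S \<longrightarrow> c x = 0) \<and>
     (\<forall>v. netf src dst c v = (if dst e = v then 1 else 0) - (if src e = v then 1 else 0))"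
  proof
    fix e assume "e \<in> S"
    then show "\<exists>c. (\<forall>x. c x \<ge> 0) \<and> (\<forall>x. x \<notin> S \<longrightarrow> c x = 0) \<and>
     (\<forall>v. netf src dst c v = (if dst e = v then 1 else 0) - (if src e = v then 1 else 0))"
      using assms path_flow[of "dst e" "src e" src dst S] by blast
  qed
  from bchoice[OF this] obtain C where C0: "\<forall>e\<in>S. (\<forall>x. C e x \<ge> 0) \<and> (\<forall>x. x \<notin> S \<longrightarrow> C e x = 0) \<and>
     (\<forall>v. netf src dst (C e) v = (if dst e = v then 1 else 0) - (if src e = v then 1 else 0))"
    by blast
  have Cnn: "\<And>e x. e \<in> S \<Longrightarrow> C e x \<ge> 0" using C0 by blast
  have Cout: "\<And>e x. e \<in> S \<Longrightarrow> x \<notin> S \<Longrightarrow> C e x = 0" using C0 by blast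
  have Cnet: "\<And>e v. e \<in> S \<Longrightarrow> netf src dst (C e) v = (if dst e = v then 1 else 0) - (if src e = v then 1 else 0)"
    using C0 by blast
  define c where "c = (\<lambda>x. \<Sum>e\<in>S. C e x + (if x = e then 1 else 0))"
  have "\<forall>x. 0 \<le> c x" unfolding c_def using Cnn by (auto intro!: sum_nonneg add_nonneg_nonneg)
  moreover have "\<forall>x\<in>S. c x > 0"
  proof
    fix x assume x: "x \<in> S"
    have "c x \<ge> C x x + 1" unfolding c_def
      using member_le_sum[of x S "\<lambda>e. C e x + (if x = e then 1 else 0)"] Cnn x
      by (simp add: add_nonneg_nonneg)
    moreover have "C x x \<ge> 0" using Cnn x by blast
    ultimately show "c x > 0" by linarith
  qed
  moreover have "\<forall>x. x \<notin> S \<longrightarrow> c x = 0" unfolding c_def using Cout by (auto intro!: sum.neutral)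
  moreover have "\<forall>v. netf src dst c v = 0"
  proof
    fix v
    have "netf src dst c v = (\<Sum>e\<in>S. netf src dst (\<lambda>x. C e x + (if x = e then 1 else 0)) v)"
      unfolding c_def by (rule netf_sum) simp
    also have "\<dots> = 0" by (rule sum.neutral) (simp add: netf_add netf_ind Cnet)
    finally show "netf src dst c v = 0" .
  qed
  ultimately show ?thesis by blast
qed
lemma pair_sum:
  fixes Y :: "'n::finite \<Rightarrow> 'n \<Rightarrow> real"
  shows "(\<Sum>e\<in>UNIV. Y (fst e) (snd e) * ((if fst e = v then 1 else 0) - (if snd e = v then 1 else 0)))
       = (\<Sum>j\<in>UNIV. Y v j) - (\<Sum>i\<in>UNIV. Y i v)"
proof -
  have "(\<Sum>e\<in>UNIV. Y (fst e) (snd e) * ((if fst e = v then 1 else 0) - (if snd e = v then 1 else 0)))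
     = (\<Sum>i\<in>UNIV. \<Sum>j\<in>UNIV. Y i j * ((if i = v then 1 else 0) - (if j = v then 1 else 0)))"
    by (simp add: sum.cartesian_product UNIV_Times_UNIV[symmetric] case_prod_beta del: UNIV_Times_UNIV)
  also have "\<dots> = (\<Sum>i\<in>UNIV. \<Sum>j\<in>UNIV. Y i j * (if i = v then 1 else 0)) - (\<Sum>i\<in>UNIV. \<Sum>j\<in>UNIV. Y i j * (if j = v then 1 else 0))"
    by (simp add: right_diff_distrib sum_subtractf)
  also have "(\<Sum>i\<in>UNIV. \<Sum>j\<in>UNIV. Y i j * (if i = v then 1 else 0)) = (\<Sum>i\<in>UNIV. if i = v then (\<Sum>j\<in>UNIV. Y i j) else 0)"
    by (rule sum.cong) auto
  also have "(\<Sum>i\<in>UNIV. \<Sum>j\<in>UNIV. Y i j * (if j = v then 1 else 0)) = (\<Sum>i\<in>UNIV. Y i v)"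
    by (rule sum.cong) (auto simp: if_distrib[of "\<lambda>x. _ * x"] cong: if_cong)
  finally show ?thesis by simp
qed

lemma irr_all:
  assumes "irreducible_sp A"
  shows "(i,j) \<in> (arcs A)\<^sup>*"
proof (cases "card (UNIV :: 'a set) = 1")
  case True
  then obtain x where "(UNIV :: 'a set) = {x}" by (rule card_1_singletonE)
  then have "i = x" "j = x" by blast+
  then have "i = j" by simp
  then show ?thesis by simp
next
  case False
  then show ?thesis using assms unfolding irreducible_sp_def irreducible_on_def by simp
qed

definition posr :: "'n sign_pattern \<Rightarrow> ('n \<times> 'n) set" where
  "posr A = {(i,j). A i j = Pos}"

definition scc :: "'n sign_pattern \<Rightarrow> 'n \<Rightarrow> 'n set" where
  "scc A i = {k. (i,k) \<in> (posr A)\<^sup>* \<and> (k,i) \<in> (posr A)\<^sup>*}"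

lemma arcs_pos_part: "arcs (pos_part A) = posr A"
  unfolding arcs_def pos_part_def posr_def by auto

lemma scc_path:
  assumes "(k,l) \<in> (posr A)\<^sup>*" "l \<in> scc A i"
  shows "k \<in> scc A i \<longrightarrow> (k,l) \<in> (posr A \<inter> scc A i \<times> scc A i)\<^sup>*"
  using assms(1)
proof (induction rule: converse_rtrancl_induct)
  case base
  then show ?case by simp
next
  case (step y z)
  show ?case
  proof
    assume y: "y \<in> scc A i"
    have yi: "(i,y) \<in> (posr A)\<^sup>*" and li: "(l,i) \<in> (posr A)\<^sup>*" using y assms(2) unfolding scc_def by auto
    have "(i,z) \<in> (posr A)\<^sup>*" using yi step(1) by (rule rtrancl_into_rtrancl)
    moreover have "(z,i) \<in> (posr A)\<^sup>*" using step(2) li by (rule rtrancl_trans)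
    ultimately have "z \<in> scc A i" unfolding scc_def by simp
    then show "(y, l) \<in> (posr A \<inter> scc A i \<times> scc A i)\<^sup>*"
      using step y by (meson IntI converse_rtrancl_into_rtrancl mem_Sigma_iff)
  qed
qed

lemma scc_comp:
  fixes A :: "('n::finite) sign_pattern"
  shows "irr_component (pos_part A) (scc A i)"
proof -
  have ii: "i \<in> scc A i" unfolding scc_def by simp
  have ne: "scc A i \<noteq> {}" using ii by blast
  have irr: "irreducible_on (pos_part A) (scc A i)"
    unfolding irreducible_on_def arcs_pos_part
  proof (rule disjI2, intro ballI)
    fix k l assume k: "k \<in> scc A i" and l: "l \<in> scc A i"
    have "(k,i) \<in> (posr A)\<^sup>*" using k unfolding scc_def by simp
    moreover have "(i,l) \<in> (posr A)\<^sup>*" using l unfolding scc_def by simp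
    ultimately have "(k,l) \<in> (posr A)\<^sup>*" by (rule rtrancl_trans)
    from scc_path[OF this l] k show "(k, l) \<in> (posr A \<inter> scc A i \<times> scc A i)\<^sup>*" by simp
  qed
  have max: "\<not> irreducible_on (pos_part A) \<beta>" if sub: "scc A i \<subset> \<beta>" for \<beta>
  proof
    assume irr: "irreducible_on (pos_part A) \<beta>"
    obtain k where k: "k \<in> \<beta>" "k \<notin> scc A i" using sub by blast
    have ib: "i \<in> \<beta>" using ii sub by blast
    show False
    proof (cases "card \<beta> = 1")
      case True
      then obtain x where x: "\<beta> = {x}" by (rule card_1_singletonE)
      then have "k = x" "i = x" using k(1) ib by simp_all
      then show False using k(2) ii by simp
    next
      case False
      then have conn: "\<forall>a\<in>\<beta>. \<forall>b\<in>\<beta>. (a,b) \<in> (posr A \<inter> \<beta> \<times> \<beta>)\<^sup>*"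
        using irr unfolding irreducible_on_def arcs_pos_part by simp
      have mono: "(posr A \<inter> \<beta> \<times> \<beta>)\<^sup>* \<subseteq> (posr A)\<^sup>*" by (rule rtrancl_mono) (rule Int_lower1)
      have "(i,k) \<in> (posr A \<inter> \<beta> \<times> \<beta>)\<^sup>*" using conn ib k(1) by simp
      then have 1: "(i,k) \<in> (posr A)\<^sup>*" using mono by (rule subsetD[rotated])
      have "(k,i) \<in> (posr A \<inter> \<beta> \<times> \<beta>)\<^sup>*" using conn ib k(1) by simp
      then have 2: "(k,i) \<in> (posr A)\<^sup>*" using mono by (rule subsetD[rotated])
      show False using k(2) 1 2 unfolding scc_def by simp
    qed
  qed
  show ?thesis unfolding irr_component_def using ne irr max by blast
qed

lemma pos_back:
  fixes A :: "('n::finite) sign_pattern"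
  assumes "\<forall>\<alpha> \<beta>. irr_component (pos_part A) \<alpha> \<and> irr_component (pos_part A) \<beta> \<and> \<alpha> \<noteq> \<beta>
           \<longrightarrow> (\<forall>i\<in>\<alpha>. \<forall>j\<in>\<beta>. A i j \<noteq> Pos)"
    and "A i j = Pos"
  shows "(j,i) \<in> (posr A)\<^sup>*"
proof (rule ccontr)
  assume "(j,i) \<notin> (posr A)\<^sup>*"
  then have "j \<notin> scc A i" unfolding scc_def by simp
  moreover have "j \<in> scc A j" "i \<in> scc A i" unfolding scc_def by simp_all
  ultimately have "scc A i \<noteq> scc A j" by blast
  then have "irr_component (pos_part A) (scc A i) \<and> irr_component (pos_part A) (scc A j) \<and> scc A i \<noteq> scc A j"
    using scc_comp[of A i] scc_comp[of A j] by blast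
  then have "\<forall>i'\<in>scc A i. \<forall>j'\<in>scc A j. A i' j' \<noteq> Pos" using assms(1) by blast
  then show False using assms(2) \<open>j \<in> scc A j\<close> \<open>i \<in> scc A i\<close> by blast
qed
definition rsum :: "('n::finite \<Rightarrow> 'n \<Rightarrow> real) \<Rightarrow> 'n \<Rightarrow> real" where
  "rsum Y i = (\<Sum>j\<in>UNIV. Y i j)"

definition balanced :: "('n::finite \<Rightarrow> 'n \<Rightarrow> real) \<Rightarrow> bool" where
  "balanced Y \<longleftrightarrow> (\<forall>v. (\<Sum>j\<in>UNIV. Y v j) = (\<Sum>i\<in>UNIV. Y i v))"

definition Lmat :: "('n::finite \<Rightarrow> 'n \<Rightarrow> real) \<Rightarrow> real^'n^'n" where
  "Lmat Y = (\<chi> i j. Y i j - (if i = j then rsum Y i else 0))"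

definition Jmat :: "real^'n^'n" where
  "Jmat = (\<chi> i j. 1)"

lemma quad:
  fixes Y :: "'n::finite \<Rightarrow> 'n \<Rightarrow> real"
  assumes "balanced Y"
  shows "(\<Sum>i\<in>UNIV. \<Sum>j\<in>UNIV. Y i j * (x i - x j)^2) = -2 * (\<Sum>i\<in>UNIV. x i * ((\<Sum>j\<in>UNIV. Y i j * x j) - rsum Y i * x i))"
proof -
  have e1: "(\<Sum>i\<in>UNIV. \<Sum>j\<in>UNIV. Y i j * (x i - x j)^2) =
     (\<Sum>i\<in>UNIV. \<Sum>j\<in>UNIV. Y i j * (x i)^2) - 2 * (\<Sum>i\<in>UNIV. \<Sum>j\<in>UNIV. x i * (Y i j * x j)) + (\<Sum>i\<in>UNIV. \<Sum>j\<in>UNIV. Y i j * (x j)^2)"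
  proof -
    have "(\<Sum>i\<in>UNIV. \<Sum>j\<in>UNIV. Y i j * (x i - x j)^2) = (\<Sum>i\<in>UNIV. \<Sum>j\<in>UNIV. (Y i j * (x i)^2 - 2 * (x i * (Y i j * x j))) + Y i j * (x j)^2)"
      by (intro sum.cong refl) (simp add: power2_eq_square algebra_simps)
    then show ?thesis by (simp add: sum.distrib sum_subtractf sum_distrib_left)
  qed
  have e2: "(\<Sum>i\<in>UNIV. \<Sum>j\<in>UNIV. Y i j * (x i)^2) = (\<Sum>i\<in>UNIV. rsum Y i * (x i)^2)"
    unfolding rsum_def by (simp add: sum_distrib_right)
  have e3: "(\<Sum>i\<in>UNIV. \<Sum>j\<in>UNIV. Y i j * (x j)^2) = (\<Sum>j\<in>UNIV. rsum Y j * (x j)^2)"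
  proof -
    have "(\<Sum>i\<in>UNIV. \<Sum>j\<in>UNIV. Y i j * (x j)^2) = (\<Sum>j\<in>UNIV. (\<Sum>i\<in>UNIV. Y i j) * (x j)^2)"
      by (subst sum.swap) (simp add: sum_distrib_right)
    also have "\<dots> = (\<Sum>j\<in>UNIV. rsum Y j * (x j)^2)"
      using assms unfolding balanced_def rsum_def by simp
    finally show ?thesis .
  qed
  have e4: "(\<Sum>i\<in>UNIV. x i * ((\<Sum>j\<in>UNIV. Y i j * x j) - rsum Y i * x i)) =
     (\<Sum>i\<in>UNIV. \<Sum>j\<in>UNIV. x i * (Y i j * x j)) - (\<Sum>i\<in>UNIV. rsum Y i * (x i)^2)"
    by (simp add: right_diff_distrib sum_subtractf sum_distrib_left power2_eq_square algebra_simps)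
  show ?thesis unfolding e1 e2 e3 e4 by simp
qed

lemma kernel_const:
  fixes Y :: "'n::finite \<Rightarrow> 'n \<Rightarrow> real"
  assumes bal: "balanced Y" and nn: "\<forall>i j. Y i j \<ge> 0"
    and conn: "\<forall>i j. (i,j) \<in> {(i,j). Y i j > 0}\<^sup>*"
    and ker: "\<forall>i. (\<Sum>j\<in>UNIV. Y i j * x j) = rsum Y i * x i"
  shows "x i = x j"
proof -
  have "(\<Sum>i\<in>UNIV. \<Sum>j\<in>UNIV. Y i j * (x i - x j)^2) = 0"
    unfolding quad[OF bal] using ker by simp
  then have z: "\<forall>i j. Y i j * (x i - x j)^2 = 0"
    using nn by (simp add: sum_nonneg_eq_0_iff sum_nonneg)
  have edge: "x a = x b" if "Y a b > 0" for a b
    using z[rule_format, of a b] that by simp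
  have "(i,j) \<in> {(i,j). Y i j > 0}\<^sup>*" using conn by blast
  then show ?thesis
  proof (induction rule: rtrancl_induct)
    case base then show ?case by simp
  next
    case (step b c) then show ?case using edge[of b c] by simp
  qed
qed

lemma Lmat_mult: "(Lmat Y *v x) $ i = (\<Sum>j\<in>UNIV. Y i j * x $ j) - rsum Y i * x $ i"
proof -
  have "(Lmat Y *v x) $ i = (\<Sum>j\<in>UNIV. Y i j * x $ j - (if i = j then rsum Y i * x $ j else 0))"
  proof -
    have "(Lmat Y *v x) $ i = (\<Sum>j\<in>UNIV. (Y i j - (if i = j then rsum Y i else 0)) * x $ j)"
      by (simp add: Lmat_def matrix_vector_mult_def)
    also have "\<dots> = (\<Sum>j\<in>UNIV. Y i j * x $ j - (if i = j then rsum Y i * x $ j else 0))"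
      by (intro sum.cong refl) (simp add: algebra_simps)
    finally show ?thesis .
  qed
  then show ?thesis by (simp add: sum_subtractf)
qed

lemma Jmat_mult: "(Jmat *v x) $ i = (\<Sum>j\<in>UNIV. x $ j)"
  unfolding Jmat_def matrix_vector_mult_def by simp

lemma Lmat_colsum:
  assumes "balanced Y"
  shows "(\<Sum>i\<in>UNIV. (Lmat Y *v x) $ i) = 0"
proof -
  have "(\<Sum>i\<in>UNIV. \<Sum>j\<in>UNIV. Y i j * x $ j) = (\<Sum>j\<in>UNIV. (\<Sum>i\<in>UNIV. Y i j) * x $ j)"
    by (subst sum.swap) (simp add: sum_distrib_right)
  also have "\<dots> = (\<Sum>j\<in>UNIV. rsum Y j * x $ j)" using assms unfolding balanced_def rsum_def by simp
  finally show ?thesis unfolding Lmat_mult by (simp add: sum_subtractf)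
qed

lemma det_nz_of_inj:
  fixes A :: "real^'n^'n"
  assumes "\<forall>x. A *v x = 0 \<longrightarrow> x = 0"
  shows "det A \<noteq> 0"
  using assms matrix_left_invertible_ker[of A] invertible_left_inverse[of A] invertible_det_nz[of A] by blast

lemma inj_of_det_nz:
  fixes A :: "real^'n^'n"
  assumes "det A \<noteq> 0" "A *v x = 0"
  shows "x = 0"
proof -
  obtain B where "B ** A = mat 1" using assms(1) invertible_det_nz[of A] invertible_left_inverse[of A] by blast
  then have "x = B *v (A *v x)" by (simp add: matrix_vector_mul_assoc)
  then show ?thesis using assms(2) by simp
qed

lemma det_good:
  fixes Y :: "'n::finite \<Rightarrow> 'n \<Rightarrow> real"
  assumes bal: "balanced Y" and nn: "\<forall>i j. Y i j \<ge> 0"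
    and conn: "\<forall>i j. (i,j) \<in> {(i,j). Y i j > 0}\<^sup>*"
  shows "det (Lmat Y + Jmat) \<noteq> 0"
proof (rule det_nz_of_inj, intro allI impI)
  fix x :: "real^'n" assume x: "(Lmat Y + Jmat) *v x = 0"
  have "(\<Sum>i\<in>UNIV. ((Lmat Y + Jmat) *v x) $ i) = 0" using x by simp
  then have "(\<Sum>i\<in>UNIV. (Lmat Y *v x) $ i) + (\<Sum>i\<in>UNIV. (Jmat *v x) $ i) = 0"
    by (simp add: matrix_vector_mult_add_rdistrib sum.distrib)
  then have "real CARD('n) * (\<Sum>j\<in>UNIV. x $ j) = 0" using Lmat_colsum[OF bal] by (simp add: Jmat_mult)
  then have s0: "(\<Sum>j\<in>UNIV. x $ j) = 0" by simp
  have L0: "(Lmat Y *v x) $ i = 0" for i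
    using x s0 by (metis (no_types, lifting) Jmat_mult add_cancel_right_right matrix_vector_mult_add_rdistrib vector_add_component zero_index)
  have "\<forall>i. (\<Sum>j\<in>UNIV. Y i j * x $ j) = rsum Y i * x $ i" using L0 by (simp add: Lmat_mult)
  then have c: "x $ i = x $ j" for i j using kernel_const[OF bal nn conn, of "\<lambda>k. x $ k"] by blast
  fix k
  have "(\<Sum>j\<in>UNIV. x $ j) = (\<Sum>j\<in>(UNIV::'n set). x $ k)" by (rule sum.cong[OF refl]) (rule c)
  then have "(\<Sum>j\<in>UNIV. x $ j) = real CARD('n) * x $ k" by simp
  then have "x $ k = 0" using s0 by simp
  then show "x = 0" using c[of _ k] by (simp add: vec_eq_iff)
qed
lemma ker_from_det:
  fixes Y :: "'n::finite \<Rightarrow> 'n \<Rightarrow> real"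
  assumes bal: "balanced Y" and d: "det (Lmat Y + Jmat) \<noteq> 0"
    and ker: "\<forall>i. (\<Sum>j\<in>UNIV. Y i j * x j) = rsum Y i * x i"
  shows "x i = x j"
proof -
  define m where "m = (\<Sum>j\<in>UNIV. x j) / real CARD('n)"
  define v :: "real^'n" where "v = (\<chi> k. x k - m)"
  have "(Lmat Y *v v) $ i = 0" for i
  proof -
    have "(Lmat Y *v v) $ i = (\<Sum>j\<in>UNIV. Y i j * x j - m * Y i j) - rsum Y i * (x i - m)"
      unfolding Lmat_mult v_def by (simp add: algebra_simps)
    also have "\<dots> = ((\<Sum>j\<in>UNIV. Y i j * x j) - rsum Y i * x i) - m * ((\<Sum>j\<in>UNIV. Y i j) - rsum Y i)"
      by (simp add: sum_subtractf sum_distrib_left algebra_simps)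
    also have "\<dots> = 0" using ker by (simp add: rsum_def)
    finally show ?thesis .
  qed
  moreover have "(Jmat *v v) $ i = 0" for i
  proof -
    have "(Jmat *v v) $ i = (\<Sum>j\<in>UNIV. x j) - real CARD('n) * m"
      unfolding Jmat_mult v_def by (simp add: sum_subtractf)
    also have "\<dots> = 0" unfolding m_def by simp
    finally show ?thesis .
  qed
  ultimately have "(Lmat Y + Jmat) *v v = 0"
    by (simp add: matrix_vector_mult_add_rdistrib vec_eq_iff)
  then have "v = 0" using inj_of_det_nz[OF d] by blast
  then have "x k = m" for k unfolding v_def by (simp add: vec_eq_iff)
  then show ?thesis by simp
qed

lemma balanced_transpose:
  assumes "balanced Y" shows "balanced (\<lambda>i j. Y j i)"
  using assms unfolding balanced_def by simp

lemma Lmat_transpose: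
  assumes "balanced Y"
  shows "transpose (Lmat Y + Jmat) = Lmat (\<lambda>i j. Y j i) + Jmat"
proof -
  have "rsum (\<lambda>i j. Y j i) i = rsum Y i" for i using assms unfolding balanced_def rsum_def by simp
  then show ?thesis unfolding Lmat_def Jmat_def transpose_def by (simp add: vec_eq_iff)
qed

lemma ker_left_from_det:
  fixes Y :: "'n::finite \<Rightarrow> 'n \<Rightarrow> real"
  assumes bal: "balanced Y" and d: "det (Lmat Y + Jmat) \<noteq> 0"
    and ker: "\<forall>j. (\<Sum>i\<in>UNIV. z i * Y i j) = rsum Y j * z j"
  shows "z i = z j"
proof -
  have d': "det (Lmat (\<lambda>i j. Y j i) + Jmat) \<noteq> 0"
    using d Lmat_transpose[OF bal] det_transpose by metis
  have r: "rsum (\<lambda>i j. Y j i) i = rsum Y i" for i using bal unfolding balanced_def rsum_def by simp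
  have "\<forall>i. (\<Sum>j\<in>UNIV. (\<lambda>i j. Y j i) i j * z j) = rsum (\<lambda>i j. Y j i) i * z i"
    using ker r by (simp add: mult.commute)
  from ker_from_det[OF balanced_transpose[OF bal] d' this] show ?thesis .
qed

lemma det_poly_finite:
  fixes A B C :: "real^'n::finite^'n"
  assumes "det C \<noteq> 0"
  shows "finite {b. det (C + b *\<^sub>R B + (b^2) *\<^sub>R A) = 0}"
proof -
  define P where "P = (\<Sum>p\<in>{p. p permutes (UNIV::'n set)}. smult (of_int (sign p))
       (\<Prod>i\<in>UNIV. [:C$i$p i, B$i$p i, A$i$p i:]))"
  have ev: "poly P b = det (C + b *\<^sub>R B + (b^2) *\<^sub>R A)" for b
    unfolding P_def det_def poly_sum poly_prod
    by (intro sum.cong refl) (simp add: poly_prod power2_eq_square algebra_simps)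
  have "poly P 0 \<noteq> 0" using ev[of 0] assms by simp
  then have "P \<noteq> 0" by auto
  then have "finite {b. poly P b = 0}" by (rule poly_roots_finite)
  then show ?thesis using ev by simp
qed
lemma mm_zero_right: "(A::real^'n^'m) ** (0::real^'p^'n) = 0"
  by (simp add: matrix_matrix_mult_def vec_eq_iff)
lemma mm_zero_left: "(0::real^'n^'m) ** (A::real^'p^'n) = 0"
  by (simp add: matrix_matrix_mult_def vec_eq_iff)
lemma mm_add_left: "((A::real^'n^'m) + B) ** (C::real^'p^'n) = A ** C + B ** C"
  by (simp add: matrix_matrix_mult_def vec_eq_iff distrib_right sum.distrib)
lemma mm_diff_left: "((A::real^'n^'m) - B) ** (C::real^'p^'n) = A ** C - B ** C"
  by (simp add: matrix_matrix_mult_def vec_eq_iff left_diff_distrib sum_subtractf)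

lemma mm_sum_right: "finite S \<Longrightarrow> (A::real^'n^'m) ** (\<Sum>k\<in>S. f k) = (\<Sum>k\<in>S. A ** (f k::real^'p^'n))"
  by (induction S rule: finite_induct) (simp_all add: mm_zero_right matrix_add_ldistrib)
lemma mm_sum_left: "finite S \<Longrightarrow> (\<Sum>k\<in>S. f k) ** (A::real^'p^'n) = (\<Sum>k\<in>S. (f k::real^'n^'m) ** A)"
  by (induction S rule: finite_induct) (simp_all add: mm_zero_left mm_add_left)
lemma mv_sum: "finite S \<Longrightarrow> (\<Sum>k\<in>S. f k) *v (u::real^'n) = (\<Sum>k\<in>S. (f k::real^'n^'m) *v u)"
  by (induction S rule: finite_induct) (simp_all add: matrix_vector_mult_add_rdistrib)
lemma mm_scale_right: "(A::real^'n^'m) ** (c *\<^sub>R (B::real^'p^'n)) = c *\<^sub>R (A ** B)"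
  by (simp add: matrix_matrix_mult_def vec_eq_iff sum_distrib_left algebra_simps)
lemma mm_scale_left: "(c *\<^sub>R (A::real^'n^'m)) ** (B::real^'p^'n) = c *\<^sub>R (A ** B)"
  by (simp add: scalar_matrix_assoc)

lemma mat_power_0: "mat_power M 0 = mat 1"
  unfolding mat_power_def by simp
lemma mat_power_Suc: "mat_power M (Suc k) = mat_power M k ** M"
  unfolding mat_power_def by simp
lemma mat_power_comm: "mat_power M k ** M = M ** mat_power M k"
proof (induction k)
  case 0 then show ?case by (simp add: mat_power_0)
next
  case (Suc k)
  have "mat_power M (Suc k) ** M = (M ** mat_power M k) ** M" using Suc by (simp add: mat_power_Suc)
  also have "\<dots> = M ** (mat_power M k ** M)" by (simp add: matrix_mul_assoc)
  finally show ?case by (simp add: mat_power_Suc)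
qed
lemma mat_power_Suc': "mat_power M (Suc k) = M ** mat_power M k"
  using mat_power_Suc mat_power_comm by metis

lemma poly_mat_le:
  assumes "degree p \<le> N"
  shows "poly_mat p M = (\<Sum>k\<le>N. coeff p k *\<^sub>R mat_power M k)"
  unfolding poly_mat_def
proof (rule sum.mono_neutral_left)
  show "\<forall>i\<in>{..N} - {..degree p}. coeff p i *\<^sub>R mat_power M i = 0"
    by (auto simp: coeff_eq_0)
qed (use assms in auto)

lemma poly_mat_add: "poly_mat (p + q) M = poly_mat p M + poly_mat q M"
proof -
  define N where "N = max (degree p) (degree q)"
  have "degree (p + q) \<le> N" unfolding N_def by (rule degree_add_le) auto
  moreover have "degree p \<le> N" "degree q \<le> N" unfolding N_def by auto
  ultimately show ?thesis by (simp add: poly_mat_le[where N=N] scaleR_add_left sum.distrib)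
qed

lemma poly_mat_smult: "poly_mat (smult a p) M = a *\<^sub>R poly_mat p M"
proof -
  have "degree (smult a p) \<le> degree p" by (rule degree_smult_le)
  then show ?thesis by (simp add: poly_mat_le[where N="degree p"] scaleR_sum_right)
qed

lemma poly_mat_monom: "poly_mat (monom c k) M = c *\<^sub>R mat_power M k"
proof -
  have "poly_mat (monom c k) M = (\<Sum>j\<le>k. coeff (monom c k) j *\<^sub>R mat_power M j)"
    by (rule poly_mat_le) (rule degree_monom_le)
  also have "\<dots> = (\<Sum>j\<le>k. if j = k then c *\<^sub>R mat_power M k else 0)"
    by (intro sum.cong refl) (simp add: coeff_monom)
  finally show ?thesis by simp
qed

lemma poly_mat_sum: "finite S \<Longrightarrow> poly_mat (\<Sum>x\<in>S. f x) M = (\<Sum>x\<in>S. poly_mat (f x) M)"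
  by (induction S rule: finite_induct) (simp add: poly_mat_def, simp add: poly_mat_add)

lemma poly_mat_diff: "poly_mat (p - q) M = poly_mat p M - poly_mat q M"
proof -
  have "p - q = p + smult (-1) q" by simp
  then show ?thesis by (simp only: poly_mat_add poly_mat_smult) simp
qed

lemma poly_mat_pCons0: "poly_mat (pCons 0 p) M = M ** poly_mat p M"
proof -
  have "degree (pCons 0 p) \<le> Suc (degree p)" by (simp add: degree_pCons_le)
  then have "poly_mat (pCons 0 p) M = (\<Sum>k\<le>Suc (degree p). coeff (pCons 0 p) k *\<^sub>R mat_power M k)"
    by (rule poly_mat_le)
  also have "\<dots> = (\<Sum>k\<le>degree p. coeff p k *\<^sub>R mat_power M (Suc k))"
    by (subst sum.atMost_Suc_shift) simp
  also have "\<dots> = (\<Sum>k\<le>degree p. M ** (coeff p k *\<^sub>R mat_power M k))"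
    by (simp add: mat_power_Suc' mm_scale_right)
  also have "\<dots> = M ** poly_mat p M" unfolding poly_mat_def by (simp add: mm_sum_right)
  finally show ?thesis .
qed

lemma poly_mat_lin: "poly_mat ([:-1,1:] * p) M = (M - mat 1) ** poly_mat p M"
proof -
  have "[:-1,1:] * p = pCons 0 p - p" by simp
  then show ?thesis by (simp add: poly_mat_diff poly_mat_pCons0 mm_diff_left)
qed

lemma poly_mat_powmult:
  "poly_mat ([:-1,1:]^k * q) M = ((\<lambda>X. (M - mat 1) ** X) ^^ k) (poly_mat q M)"
proof (induction k)
  case 0 then show ?case by simp
next
  case (Suc k)
  have eq: "[:-1,1:]^(Suc k) * q = [:-1,1:] * ([:-1,1:]^k * q)" by (simp only: power_Suc mult.assoc)
  have "poly_mat ([:-1,1:]^(Suc k) * q) M = (M - mat 1) ** poly_mat ([:-1,1:]^k * q) M"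
    by (simp only: eq poly_mat_lin)
  then show ?case using Suc.IH by simp
qed

lemma poly_mat_comm: "poly_mat q M ** M = M ** poly_mat q M"
  unfolding poly_mat_def
  by (simp add: mm_sum_left mm_sum_right mm_scale_left mm_scale_right mat_power_comm)

lemma mat_power_fix: "M *v u = u \<Longrightarrow> mat_power M k *v u = u"
proof (induction k)
  case 0 then show ?case by (simp add: mat_power_0)
next
  case (Suc k) then show ?case by (simp add: mat_power_Suc matrix_vector_mul_assoc[symmetric])
qed

lemma poly_mat_fix: "M *v u = u \<Longrightarrow> poly_mat q M *v u = poly q 1 *\<^sub>R u"
  unfolding poly_mat_def poly_altdef
  by (simp add: mv_sum mat_power_fix scaleR_matrix_vector_assoc[symmetric] scaleR_sum_left)

lemma annihilating:
  fixes M :: "real^'n::finite^'n"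
  shows "\<exists>g. g \<noteq> 0 \<and> poly_mat g M = 0"
proof -
  define N where "N = CARD('n) * CARD('n)"
  show ?thesis
  proof (cases "inj_on (mat_power M) {..N}")
    case False
    then obtain i j where ij: "i \<le> N" "j \<le> N" "i \<noteq> j" "mat_power M i = mat_power M j"
      unfolding inj_on_def by auto
    define g where "g = monom (1::real) i - monom 1 j"
    have "g \<noteq> 0"
    proof
      assume "g = 0"
      then have "coeff g i = 0" by simp
      moreover have "coeff g i = 1" using ij(3) unfolding g_def by (simp only: coeff_diff coeff_monom) simp
      ultimately show False by simp
    qed
    moreover have "poly_mat g M = 0"
      unfolding g_def using ij(4) by (simp only: poly_mat_diff poly_mat_monom) simp
    ultimately show ?thesis by blast
  next
    case True
    define S where "S = mat_power M ` {..N}"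
    have "card S = card {..N}" unfolding S_def using True by (rule card_image)
    then have cS: "card S = Suc N" by simp
    have "\<not> independent S"
    proof
      assume "independent S"
      then have "card S \<le> DIM(real^'n^'n)" by (rule independent_bound[THEN conjunct2])
      moreover have "DIM(real^'n^'n) = N" unfolding N_def by simp
      ultimately show False using cS by simp
    qed
    then have "dependent S" by simp
    moreover have fS: "finite S" unfolding S_def by simp
    ultimately obtain u where u: "\<exists>v\<in>S. u v \<noteq> 0" "(\<Sum>v\<in>S. u v *\<^sub>R v) = 0"
      using real_vector.dependent_finite[OF fS] by blast
    define g where "g = (\<Sum>k\<le>N. monom (u (mat_power M k)) k)"
    have cg: "coeff g k = u (mat_power M k)" if "k \<le> N" for k
      unfolding g_def using that by (simp add: coeff_sum coeff_monom)
    have "g \<noteq> 0"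
    proof
      assume "g = 0"
      obtain v where "v \<in> S" "u v \<noteq> 0" using u by blast
      then obtain k where "k \<le> N" "v = mat_power M k" unfolding S_def by blast
      then show False using cg \<open>g = 0\<close> \<open>u v \<noteq> 0\<close> by simp
    qed
    moreover have "poly_mat g M = 0"
    proof -
      have "poly_mat g M = (\<Sum>k\<le>N. u (mat_power M k) *\<^sub>R mat_power M k)"
        unfolding g_def by (simp add: poly_mat_sum poly_mat_monom)
      also have "\<dots> = (\<Sum>v\<in>S. u v *\<^sub>R v)"
        unfolding S_def using sum.reindex[OF True, of "\<lambda>v. u v *\<^sub>R v"] by simp
      finally show ?thesis using u by simp
    qed
    ultimately show ?thesis by blast
  qed
qed
lemma mm_entry: "((A::real^'n^'m) ** (B::real^'p^'n)) $ i $ j = (\<Sum>k\<in>UNIV. A $ i $ k * B $ k $ j)"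
  by (simp add: matrix_matrix_mult_def)

lemma ap_criterion:
  fixes M :: "real^'n::finite^'n" and w :: "'n \<Rightarrow> real"
  assumes wpos: "\<forall>i. w i > 0"
    and r1: "M *v (\<chi> i. 1) = (\<chi> i. 1)"
    and l1: "\<forall>j. (\<Sum>i\<in>UNIV. w i * M $ i $ j) = w j"
    and kr: "\<forall>x::real^'n. M *v x = x \<longrightarrow> (\<forall>i j. x $ i = x $ j)"
    and kl: "\<forall>z::'n \<Rightarrow> real. (\<forall>j. (\<Sum>i\<in>UNIV. z i * M $ i $ j) = z j) \<longrightarrow> (\<exists>c. \<forall>i. z i = c * w i)"
  shows "algebraically_positive M"
proof -
  define T where "T = (\<lambda>X::real^'n^'n. (M - mat 1) ** X)"
  have T_entry: "T X $ i $ j = (\<Sum>k\<in>UNIV. M $ i $ k * X $ k $ j) - X $ i $ j" for X i j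
    unfolding T_def mm_diff_left by (simp add: mm_entry matrix_mul_lid)
  have colconst: "X $ i $ j = X $ i' $ j" if "T X = 0" for X i i' j
  proof -
    define x :: "real^'n" where "x = (\<chi> k. X $ k $ j)"
    have "M *v x = x"
    proof (subst vec_eq_iff, intro allI)
      fix a
      have "T X $ a $ j = 0" using that by simp
      then show "(M *v x) $ a = x $ a" unfolding T_entry x_def by (simp add: matrix_vector_mult_def)
    qed
    then have "x $ i = x $ i'" using kr by blast
    then show ?thesis unfolding x_def by simp
  qed
  have wsum: "(\<Sum>i\<in>UNIV. w i * T X $ i $ j) = 0" for X j
  proof -
    have "(\<Sum>i\<in>UNIV. w i * T X $ i $ j) =
        (\<Sum>i\<in>UNIV. \<Sum>k\<in>UNIV. w i * M $ i $ k * X $ k $ j) - (\<Sum>i\<in>UNIV. w i * X $ i $ j)"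
      unfolding T_entry by (simp add: right_diff_distrib sum_subtractf sum_distrib_left mult.assoc)
    also have "(\<Sum>i\<in>UNIV. \<Sum>k\<in>UNIV. w i * M $ i $ k * X $ k $ j) = (\<Sum>k\<in>UNIV. (\<Sum>i\<in>UNIV. w i * M $ i $ k) * X $ k $ j)"
      by (subst sum.swap) (simp add: sum_distrib_right)
    also have "\<dots> = (\<Sum>k\<in>UNIV. w k * X $ k $ j)" using l1 by simp
    finally show ?thesis by simp
  qed
  have TT: "T X = 0" if "T (T X) = 0" for X
  proof -
    have "T X $ i $ j = 0" for i j
    proof -
      have c: "T X $ k $ j = T X $ i $ j" for k using colconst[OF that] by blast
      have "0 = (\<Sum>k\<in>UNIV. w k * T X $ k $ j)" using wsum by simp
      also have "\<dots> = (\<Sum>k\<in>UNIV. w k * T X $ i $ j)"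
      proof (rule sum.cong[OF refl])
        fix k show "w k * T X $ k $ j = w k * T X $ i $ j" using c[of k] by simp
      qed
      also have "\<dots> = (\<Sum>k\<in>UNIV. w k) * T X $ i $ j" by (simp add: sum_distrib_right)
      finally have "(\<Sum>k\<in>UNIV. w k) * T X $ i $ j = 0" by simp
      moreover have "(\<Sum>k\<in>UNIV. w k) > 0" using wpos by (simp add: sum_pos)
      ultimately show ?thesis by simp
    qed
    then show ?thesis by (simp add: vec_eq_iff)
  qed
  have Tk: "T X = 0" if "(T ^^ k) X = 0" for k X
    using that
  proof (induction k arbitrary: X)
    case 0 then show ?case unfolding T_def by (simp add: mm_zero_right)
  next
    case (Suc k)
    have "(T ^^ k) (T X) = 0" using Suc.prems by (simp add: funpow_Suc_right del: funpow.simps)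
    then have "T (T X) = 0" by (rule Suc.IH)
    then show ?case by (rule TT)
  qed
  obtain g where g: "g \<noteq> 0" "poly_mat g M = 0" using annihilating by blast
  obtain q where q: "g = [:- 1, 1:] ^ order 1 g * q" "\<not> [:- 1, 1:] dvd q"
    using order_decomp[OF g(1), of 1] by blast
  have q1: "poly q 1 \<noteq> 0" using q(2) by (simp add: poly_eq_0_iff_dvd)
  define Z where "Z = poly_mat q M"
  have "poly_mat ([:- 1, 1:] ^ order 1 g * q) M = 0" using g(2) q(1) by metis
  then have "(T ^^ order 1 g) Z = 0" unfolding Z_def T_def poly_mat_powmult .
  then have TZ: "T Z = 0" by (rule Tk)
  obtain a :: 'n where True by simp
  define c where "c = (\<lambda>j. Z $ a $ j)"
  have Zc: "Z $ i $ j = c j" for i j unfolding c_def using colconst[OF TZ] by blast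
  have MZ: "M ** Z = Z" using TZ unfolding T_def mm_diff_left by (simp add: matrix_mul_lid)
  have ZM: "Z ** M = Z" using MZ poly_mat_comm[of q M] unfolding Z_def by simp
  have "\<forall>j. (\<Sum>i\<in>UNIV. c i * M $ i $ j) = c j"
  proof
    fix j
    have "(Z ** M) $ a $ j = Z $ a $ j" using ZM by simp
    then show "(\<Sum>i\<in>UNIV. c i * M $ i $ j) = c j" unfolding mm_entry Zc by simp
  qed
  then obtain \<kappa> where \<kappa>: "\<forall>i. c i = \<kappa> * w i" using kl by blast
  have "(Z *v (\<chi> i. 1)) $ a = (poly q 1 *\<^sub>R (\<chi> i. 1) :: real^'n) $ a"
    unfolding Z_def using poly_mat_fix[OF r1, of q] by simp
  then have "(\<Sum>j\<in>UNIV. \<kappa> * w j) = poly q 1"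
    by (simp add: matrix_vector_mult_def Zc \<kappa>)
  then have k0: "\<kappa> \<noteq> 0" using q1 by auto
  show ?thesis
    unfolding algebraically_positive_def
  proof (intro exI[of _ "smult (1/\<kappa>) q"] allI)
    fix i j
    have "poly_mat (smult (1/\<kappa>) q) M $ i $ j = (1/\<kappa>) * (\<kappa> * w j)"
      by (simp add: poly_mat_smult Z_def[symmetric] Zc \<kappa>)
    also have "\<dots> = w j" using k0 by simp
    finally show "poly_mat (smult (1/\<kappa>) q) M $ i $ j > 0" using wpos by simp
  qed
qed
lemma balanced_of_netf:
  fixes c :: "'n::finite \<times> 'n \<Rightarrow> real"
  assumes "\<forall>v. netf fst snd c v = 0"
  shows "balanced (\<lambda>i j. c (i,j))"
  unfolding balanced_def
proof
  fix v
  have "netf fst snd c v = (\<Sum>e\<in>UNIV. (\<lambda>i j. c (i,j)) (fst e) (snd e) * ((if fst e = v then 1 else 0) - (if snd e = v then 1 else 0)))"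
    unfolding netf_def by simp
  then have "(\<Sum>j\<in>UNIV. c (v,j)) - (\<Sum>i\<in>UNIV. c (i,v)) = 0" using assms pair_sum[of "\<lambda>i j. c (i,j)" v] by simp
  then show "(\<Sum>j\<in>UNIV. c (v,j)) = (\<Sum>i\<in>UNIV. c (i,v))" by simp
qed

lemma balanced_R:
  fixes c :: "'n::finite \<times> 'n \<Rightarrow> real" and A :: "'n sign_pattern"
  defines "src \<equiv> \<lambda>e. if A (fst e) (snd e) = Pos then fst e else snd e"
    and "dst \<equiv> \<lambda>e. if A (fst e) (snd e) = Pos then snd e else fst e"
  assumes "\<forall>v. netf src dst c v = 0" and "\<forall>e. A (fst e) (snd e) = Zero \<longrightarrow> c e = 0"
  shows "balanced (\<lambda>i j. if A i j = Pos then c (i,j) else if A i j = Neg then - c (i,j) else 0)"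
  unfolding balanced_def
proof
  fix v
  let ?R = "\<lambda>i j. if A i j = Pos then c (i,j) else if A i j = Neg then - c (i,j) else 0"
  have "netf src dst c v = (\<Sum>e\<in>UNIV. ?R (fst e) (snd e) * ((if fst e = v then 1 else 0) - (if snd e = v then 1 else 0)))"
    unfolding netf_def
  proof (rule sum.cong[OF refl])
    fix e :: "'n \<times> 'n"
    show "c e * ((if src e = v then 1 else 0) - (if dst e = v then 1 else 0)) =
          ?R (fst e) (snd e) * ((if fst e = v then 1 else 0) - (if snd e = v then 1 else 0))"
      using assms(4)[rule_format, of e] unfolding src_def dst_def
      by (cases "A (fst e) (snd e)") auto
  qed
  then have "(\<Sum>j\<in>UNIV. ?R v j) - (\<Sum>i\<in>UNIV. ?R i v) = 0" using assms(3) pair_sum[of ?R v] by simp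
  then show "(\<Sum>j\<in>UNIV. ?R v j) = (\<Sum>i\<in>UNIV. ?R i v)" by simp
qed

lemma rsum_comb: "rsum (\<lambda>i j. b^2 * K i j + b * R i j + Y i j) i = b^2 * rsum K i + b * rsum R i + rsum Y i"
  unfolding rsum_def by (simp add: sum.distrib sum_distrib_left)

lemma Lmat_comb:
  "Lmat (\<lambda>i j. b^2 * K i j + b * R i j + Y i j) + Jmat = (Lmat Y + Jmat) + b *\<^sub>R Lmat R + (b^2) *\<^sub>R Lmat K"
  unfolding Lmat_def rsum_comb
  by (simp add: vec_eq_iff algebra_simps)

lemma balanced_comb:
  assumes "balanced K" "balanced R" "balanced Y"
  shows "balanced (\<lambda>i j. b^2 * K i j + b * R i j + Y i j)"
  unfolding balanced_def
proof
  fix v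
  have "(\<Sum>j\<in>UNIV. b^2 * K v j + b * R v j + Y v j) = b^2 * (\<Sum>j\<in>UNIV. K v j) + b * (\<Sum>j\<in>UNIV. R v j) + (\<Sum>j\<in>UNIV. Y v j)"
    by (simp add: sum.distrib sum_distrib_left)
  moreover have "(\<Sum>i\<in>UNIV. b^2 * K i v + b * R i v + Y i v) = b^2 * (\<Sum>i\<in>UNIV. K i v) + b * (\<Sum>i\<in>UNIV. R i v) + (\<Sum>i\<in>UNIV. Y i v)"
    by (simp add: sum.distrib sum_distrib_left)
  ultimately show "(\<Sum>j\<in>UNIV. b^2 * K v j + b * R v j + Y v j) = (\<Sum>i\<in>UNIV. b^2 * K i v + b * R i v + Y i v)"
    using assms unfolding balanced_def by simp
qed

theorem theorem3p16:
  fixes A :: "('n::finite) sign_pattern"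
  assumes "AP_irreducible A"
    and "\<forall>\<alpha> \<beta>. irr_component (pos_part A) \<alpha> \<and> irr_component (pos_part A) \<beta> \<and> \<alpha> \<noteq> \<beta>
           \<longrightarrow> (\<forall>i\<in>\<alpha>. \<forall>j\<in>\<beta>. A i j \<noteq> Pos)"
  shows "allows_AP A"
proof -
  have irrA: "irreducible_sp A" and rowpos: "\<forall>i. \<exists>j. A i j = Pos" and irrB: "irreducible_sp (B_pat A)"
    using assms(1) unfolding AP_irreducible_def by auto
  have relK: "{(fst e, snd e) | e. e \<in> {e. A (fst e) (snd e) = Pos}} = posr A"
    unfolding posr_def by auto
  have "\<forall>e\<in>{e. A (fst e) (snd e) = Pos}. (snd e, fst e) \<in> {(fst e, snd e) | e. e \<in> {e. A (fst e) (snd e) = Pos}}\<^sup>*"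
    unfolding relK using pos_back[OF assms(2)] by blast
  from circulation[OF this] obtain cK where cK: "\<forall>e. cK e \<ge> 0" "\<forall>e\<in>{e. A (fst e) (snd e) = Pos}. cK e > 0"
    "\<forall>e. e \<notin> {e. A (fst e) (snd e) = Pos} \<longrightarrow> cK e = 0" "\<forall>v. netf fst snd cK v = 0"
    by blast
  define K where "K = (\<lambda>i j. cK (i,j))"
  have balK: "balanced K" unfolding K_def using balanced_of_netf cK(4) by blast
  have Kpos: "A i j = Pos \<Longrightarrow> K i j > 0" for i j unfolding K_def using cK(2) by auto
  have Kzero: "A i j \<noteq> Pos \<Longrightarrow> K i j = 0" for i j unfolding K_def using cK(3) by auto
  have Knn: "K i j \<ge> 0" for i j unfolding K_def using cK(1) by auto
  define srcR where "srcR = (\<lambda>e::'n\<times>'n. if A (fst e) (snd e) = Pos then fst e else snd e)"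
  define dstR where "dstR = (\<lambda>e::'n\<times>'n. if A (fst e) (snd e) = Pos then snd e else fst e)"
  have "arcs (B_pat A) \<subseteq> {(srcR e, dstR e) | e. e \<in> {e. A (fst e) (snd e) \<noteq> Zero}}"
  proof
    fix p assume "p \<in> arcs (B_pat A)"
    then obtain x y where p: "p = (x,y)" "A x y = Pos \<or> A y x = Neg"
      unfolding arcs_def B_pat_def by (auto split: if_splits)
    show "p \<in> {(srcR e, dstR e) | e. e \<in> {e. A (fst e) (snd e) \<noteq> Zero}}"
    proof (cases "A x y = Pos")
      case True
      then show ?thesis unfolding p srcR_def dstR_def by (intro CollectI exI[of _ "(x,y)"]) simp
    next
      case False
      then have "A y x = Neg" using p by simp
      then show ?thesis unfolding p srcR_def dstR_def by (intro CollectI exI[of _ "(y,x)"]) simp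
    qed
  qed
  then have "(arcs (B_pat A))\<^sup>* \<subseteq> {(srcR e, dstR e) | e. e \<in> {e. A (fst e) (snd e) \<noteq> Zero}}\<^sup>*"
    by (rule rtrancl_mono)
  then have "\<forall>e\<in>{e. A (fst e) (snd e) \<noteq> Zero}. (dstR e, srcR e) \<in> {(srcR e, dstR e) | e. e \<in> {e. A (fst e) (snd e) \<noteq> Zero}}\<^sup>*"
    using irr_all[OF irrB] by blast
  from circulation[OF this] obtain cR where cR: "\<forall>e. cR e \<ge> 0" "\<forall>e\<in>{e. A (fst e) (snd e) \<noteq> Zero}. cR e > 0"
    "\<forall>e. e \<notin> {e. A (fst e) (snd e) \<noteq> Zero} \<longrightarrow> cR e = 0" "\<forall>v. netf srcR dstR cR v = 0"
    by blast
  define R where "R = (\<lambda>i j. if A i j = Pos then cR (i,j) else if A i j = Neg then - cR (i,j) else 0)"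
  have balR: "balanced R" unfolding R_def
    using balanced_R[of A cR] cR(3,4) unfolding srcR_def dstR_def by auto
  have relA: "{(fst e, snd e) | e. e \<in> {e. A (fst e) (snd e) \<noteq> Zero}} = arcs A"
    unfolding arcs_def by auto
  have "\<forall>e\<in>{e. A (fst e) (snd e) \<noteq> Zero}. (snd e, fst e) \<in> {(fst e, snd e) | e. e \<in> {e. A (fst e) (snd e) \<noteq> Zero}}\<^sup>*"
    unfolding relA using irr_all[OF irrA] by blast
  from circulation[OF this] obtain c1 where c1: "\<forall>e. c1 e \<ge> 0" "\<forall>e\<in>{e. A (fst e) (snd e) \<noteq> Zero}. c1 e > 0"
    "\<forall>e. e \<notin> {e. A (fst e) (snd e) \<noteq> Zero} \<longrightarrow> c1 e = 0" "\<forall>v. netf fst snd c1 v = 0"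
    by blast
  define Y1 where "Y1 = (\<lambda>i j. c1 (i,j))"
  have balY1: "balanced Y1" unfolding Y1_def using balanced_of_netf c1(4) by blast
  have Y1nn: "\<forall>i j. Y1 i j \<ge> 0" unfolding Y1_def using c1(1) by auto
  have Y1zero: "A i j = Zero \<Longrightarrow> Y1 i j = 0" for i j unfolding Y1_def using c1(3) by auto
  have "arcs A \<subseteq> {(i,j). Y1 i j > 0}" unfolding arcs_def Y1_def using c1(2) by auto
  then have "(arcs A)\<^sup>* \<subseteq> {(i,j). Y1 i j > 0}\<^sup>*" by (rule rtrancl_mono)
  then have connY1: "\<forall>i j. (i,j) \<in> {(i,j). Y1 i j > 0}\<^sup>*" using irr_all[OF irrA] by blast
  have det1: "det (Lmat Y1 + Jmat) \<noteq> 0" by (rule det_good[OF balY1 Y1nn connY1])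
  define F where "F = {b. det ((Lmat Y1 + Jmat) + b *\<^sub>R Lmat R + (b^2) *\<^sub>R Lmat K) = 0}"
  have finF: "finite F" unfolding F_def by (rule det_poly_finite[OF det1])
  have rK: "rsum K i > 0" for i
  proof -
    obtain j where "A i j = Pos" using rowpos by blast
    then have "K i j > 0" by (rule Kpos)
    moreover have "K i j \<le> rsum K i" unfolding rsum_def
      by (rule member_le_sum) (simp_all add: Knn)
    ultimately show ?thesis by simp
  qed
  define B0 where "B0 = 1 + (\<Sum>i\<in>UNIV. \<bar>rsum R i\<bar> / rsum K i)
     + (\<Sum>i\<in>UNIV. \<Sum>j\<in>UNIV. (if A i j = Neg then Y1 i j / cR (i,j) else 0))"
  have t1: "\<bar>rsum R i\<bar> / rsum K i \<le> (\<Sum>i\<in>UNIV. \<bar>rsum R i\<bar> / rsum K i)" for i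
    by (rule member_le_sum) (simp_all add: rK less_imp_le)
  have negterm_nn: "0 \<le> (if A i j = Neg then Y1 i j / cR (i,j) else 0)" for i j
    using Y1nn cR(1) by simp
  have t2: "(if A i j = Neg then Y1 i j / cR (i,j) else 0) \<le> (\<Sum>i\<in>UNIV. \<Sum>j\<in>UNIV. (if A i j = Neg then Y1 i j / cR (i,j) else 0))" for i j
  proof -
    have "(if A i j = Neg then Y1 i j / cR (i,j) else 0) \<le> (\<Sum>j\<in>UNIV. (if A i j = Neg then Y1 i j / cR (i,j) else 0))"
      by (rule member_le_sum) (simp_all add: negterm_nn)
    also have "\<dots> \<le> (\<Sum>i\<in>UNIV. \<Sum>j\<in>UNIV. (if A i j = Neg then Y1 i j / cR (i,j) else 0))"
      by (rule member_le_sum[of i UNIV "\<lambda>i. \<Sum>j\<in>UNIV. (if A i j = Neg then Y1 i j / cR (i,j) else 0)"])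
         (simp_all add: negterm_nn sum_nonneg)
    finally show ?thesis .
  qed
  have s1nn: "0 \<le> (\<Sum>i\<in>UNIV. \<bar>rsum R i\<bar> / rsum K i)" by (rule sum_nonneg) (simp add: rK less_imp_le)
  have s2nn: "0 \<le> (\<Sum>i\<in>UNIV. \<Sum>j\<in>UNIV. (if A i j = Neg then Y1 i j / cR (i,j) else 0))"
    by (intro sum_nonneg) (rule negterm_nn)
  have "infinite ({B0<..} - F)" using finF infinite_Ioi[of B0] by (metis Diff_infinite_finite)
  then obtain b where b: "b \<in> {B0<..}" "b \<notin> F" by (metis Diff_iff ex_in_conv finite.emptyI)
  have bgt: "b > B0" using b by simp
  have b1: "b > 1" using bgt s1nn s2nn unfolding B0_def by linarith
  have bR: "b > \<bar>rsum R i\<bar> / rsum K i" for i using bgt t1[of i] s2nn s1nn unfolding B0_def by linarith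
  have bN: "b > (if A i j = Neg then Y1 i j / cR (i,j) else 0)" for i j
    using bgt t2[of i j] s1nn unfolding B0_def by linarith
  define Y where "Y = (\<lambda>i j. b^2 * K i j + b * R i j + Y1 i j)"
  have balY: "balanced Y" unfolding Y_def by (rule balanced_comb[OF balK balR balY1])
  have detY: "det (Lmat Y + Jmat) \<noteq> 0" using b(2) unfolding F_def Y_def Lmat_comb by simp
  have rY: "rsum Y i > 0" for i
  proof -
    have eq: "rsum Y i = b * (b * rsum K i + rsum R i) + rsum Y1 i"
      unfolding Y_def rsum_def by (simp add: sum.distrib sum_distrib_left power2_eq_square algebra_simps)
    have "b * rsum K i > \<bar>rsum R i\<bar>" using bR[of i] rK[of i] by (simp add: pos_divide_less_eq)
    then have "b * rsum K i + rsum R i > 0" by linarith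
    then have "b * (b * rsum K i + rsum R i) > 0" using b1 by simp
    moreover have "rsum Y1 i \<ge> 0" unfolding rsum_def using Y1nn by (simp add: sum_nonneg)
    ultimately show ?thesis unfolding eq by linarith
  qed
  have signY: "(A i j = Pos \<longrightarrow> Y i j > 0) \<and> (A i j = Neg \<longrightarrow> Y i j < 0) \<and> (A i j = Zero \<longrightarrow> Y i j = 0)" for i j
  proof (cases "A i j")
    case Pos
    have "cR (i,j) > 0" using cR(2) Pos by simp
    then have "b * R i j > 0" unfolding R_def using Pos b1 by simp
    moreover have "b^2 * K i j \<ge> 0" using Knn by simp
    ultimately show ?thesis unfolding Y_def using Pos Y1nn by (simp add: add_pos_nonneg)
  next
    case Neg
    have c: "cR (i,j) > 0" using cR(2) Neg by simp
    have "b > Y1 i j / cR (i,j)" using bN[of i j] Neg by simp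
    then have "b * cR (i,j) > Y1 i j" using c by (simp add: pos_divide_less_eq)
    then show ?thesis unfolding Y_def R_def using Neg Kzero[of i j] by simp
  next
    case Zero
    then show ?thesis unfolding Y_def R_def using Kzero[of i j] Y1zero[of i j] by simp
  qed
  define M :: "real^'n^'n" where "M = (\<chi> i j. Y i j / rsum Y i)"
  have Mq: "M \<in> qual_class A"
    unfolding qual_class_def M_def using signY rY by (auto simp: divide_pos_pos divide_neg_pos)
  have "algebraically_positive M"
  proof (rule ap_criterion[where w = "rsum Y"])
    show "\<forall>i. 0 < rsum Y i" using rY by simp
    show "M *v (\<chi> i. 1) = (\<chi> i. 1)"
    proof (subst vec_eq_iff, intro allI)
      fix i
      have "(M *v (\<chi> i. 1)) $ i = (\<Sum>j\<in>UNIV. Y i j) / rsum Y i"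
        unfolding M_def matrix_vector_mult_def by (simp add: sum_divide_distrib)
      then show "(M *v (\<chi> i. 1)) $ i = (\<chi> k. (1::real)) $ i" using rY[of i] unfolding rsum_def by simp
    qed
    show "\<forall>j. (\<Sum>i\<in>UNIV. rsum Y i * M $ i $ j) = rsum Y j"
    proof
      fix j
      have "(\<Sum>i\<in>UNIV. rsum Y i * M $ i $ j) = (\<Sum>i\<in>UNIV. Y i j)"
        unfolding M_def using rY by (intro sum.cong refl) (simp add: less_imp_neq[symmetric])
      then show "(\<Sum>i\<in>UNIV. rsum Y i * M $ i $ j) = rsum Y j" using balY unfolding balanced_def rsum_def by simp
    qed
    show "\<forall>x::real^'n. M *v x = x \<longrightarrow> (\<forall>i j. x $ i = x $ j)"
    proof (intro allI impI)
      fix x :: "real^'n" and i j assume x: "M *v x = x"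
      have "\<forall>i. (\<Sum>j\<in>UNIV. Y i j * x $ j) = rsum Y i * x $ i"
      proof
        fix i
        have "(M *v x) $ i = x $ i" using x by simp
        then have "(\<Sum>j\<in>UNIV. Y i j * x $ j) / rsum Y i = x $ i"
          unfolding M_def matrix_vector_mult_def by (simp add: sum_divide_distrib)
        then show "(\<Sum>j\<in>UNIV. Y i j * x $ j) = rsum Y i * x $ i" using rY[of i]
          by (simp add: divide_eq_eq mult.commute)
      qed
      from ker_from_det[OF balY detY this] show "x $ i = x $ j" .
    qed
    show "\<forall>z::'n \<Rightarrow> real. (\<forall>j. (\<Sum>i\<in>UNIV. z i * M $ i $ j) = z j) \<longrightarrow> (\<exists>c. \<forall>i. z i = c * rsum Y i)"
    proof (intro allI impI)
      fix z :: "'n \<Rightarrow> real" assume z: "\<forall>j. (\<Sum>i\<in>UNIV. z i * M $ i $ j) = z j"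
      define z' where "z' = (\<lambda>i. z i / rsum Y i)"
      have "\<forall>j. (\<Sum>i\<in>UNIV. z' i * Y i j) = rsum Y j * z' j"
      proof
        fix j
        have "(\<Sum>i\<in>UNIV. z' i * Y i j) = (\<Sum>i\<in>UNIV. z i * M $ i $ j)"
          unfolding z'_def M_def by (intro sum.cong refl) simp
        also have "\<dots> = z j" using z by simp
        also have "\<dots> = rsum Y j * z' j" unfolding z'_def using rY[of j] by simp
        finally show "(\<Sum>i\<in>UNIV. z' i * Y i j) = rsum Y j * z' j" .
      qed
      then have zc: "z' i = z' k" for i k using ker_left_from_det[OF balY detY] by blast
      obtain a :: 'n where True by simp
      have "z i = z' a * rsum Y i" for i
        using zc[of i a] rY[of i] unfolding z'_def by (simp add: divide_eq_eq)
      then show "\<exists>c. \<forall>i. z i = c * rsum Y i" by blast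
    qed
  qed
  then show ?thesis unfolding allows_AP_def using Mq by blast
qed

end
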